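(* The filtration $F^\bullet(A/\!/E(1))_*$ is multiplicative: $F^i(A/\!/E(1))_*\cdot F^j(A/\!/E(1))_*\subseteq F^{i+j}(A/\!/E(1))_*$ for all $i,j$. Thus the associated graded $E^0(A/\!/E(1))_*=\bigoplus_jF^j/F^{j+1}$ is an $E(2)_*$-comodule algebra.
   Context: Let $p$ be an odd prime. In the mod $p$ dual Steenrod algebra let $\zeta_n,\overline{\tau}_n$ be the conjugates of Milnor's $\xi_n,\tau_n$. Let $(A/\!/E(1))_*=\mathbb{F}_p[\zeta_1,\zeta_2,\ldots]\otimes E(\overline{\tau}_2,\overline{\tau}_3,\ldots)$ and $(A/\!/E(2))_*=\mathbb{F}_p[\zeta_1,\ldots]\otimes E(\overline{\tau}_3,\ldots)$, comodule algebras over $E(2)_*=E(\overline{\tau}_0,\overline{\tau}_1,\overline{\tau}_2)$ via the coproduct of the dual Steenrod algebra. Weight: $\mathrm{wt}(\zeta_k)=\mathrm{wt}(\overline{\tau}_k)=p^k$, additive on products. Every monomial of $(A/\!/E(1))_*$ is uniquely $m\overline{\tau}_2^{\epsilon}$ with $m$ a monomial of $(A/\!/E(2))_*$ and $\epsilon\in\{0,1\}$. Let $F^j(A/\!/E(1))_*$ be the span of the monomials $m\overline{\tau}_2^\epsilon$ with $\mathrm{wt}(m)\geq pj$ (equivalently $F^j=\kappa^{-1}(\bigoplus_{k\ge j}M_2(k)\otimes E(\overline{\tau}_2))$ where $\kappa(m\overline{\tau}_2^\epsilon)=m\otimes\overline{\tau}_2^\epsilon$ and $M_2(k)$ is the span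 of monomials of $(A/\!/E(2))_*$ of weight $pk$); this is a decreasing filtration by $E(2)_*$-subcomodules. *)

theory Defs
  imports Main "HOL-Library.Poly_Mapping" "HOL-Computational_Algebra.Primes"
begin

text \<open>Model of the mod p algebra (A//E(1))_* = F_p[zeta_1,zeta_2,...] (x) E(taubar_2,taubar_3,...).
A monomial is a pair (e, S): e is the finitely supported exponent vector of the zeta_k
(key k, k \<ge> 1), S is the finite set of indices k \<ge> 2 of the exterior generators taubar_k
occurring, written in increasing order of k.\<close>

type_synonym mono = "(nat \<Rightarrow>\<^sub>0 nat) \<times> nat set"

definition valid_mono :: "mono \<Rightarrow> bool" where
  "valid_mono m \<longleftrightarrow> Poly_Mapping.keys (fst m) \<subseteq> {1..} \<and> finite (snd m) \<and> snd m \<subseteq> {2..}"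

definition AE1 :: "(mono \<Rightarrow>\<^sub>0 'k::field) set" where
  "AE1 = {x. \<forall>m\<in>Poly_Mapping.keys x. valid_mono m}"

text \<open>Sign of taubar_S * taubar_T after reordering into increasing order (graded commutativity).\<close>
definition mono_sign :: "mono \<Rightarrow> mono \<Rightarrow> 'k::field" where
  "mono_sign m n = (-1) ^ card {(a, b). a \<in> snd m \<and> b \<in> snd n \<and> b < a}"

definition mono_mult :: "mono \<Rightarrow> mono \<Rightarrow> mono" where
  "mono_mult m n = (fst m + fst n, snd m \<union> snd n)"

definition mono_coeff :: "mono \<Rightarrow> mono \<Rightarrow> 'k::field" where
  "mono_coeff m n = (if snd m \<inter> snd n = {} then mono_sign m n else 0)"

definition ae_mult :: "(mono \<Rightarrow>\<^sub>0 'k::field) \<Rightarrow> (mono \<Rightarrow>\<^sub>0 'k) \<Rightarrow> (mono \<Rightarrow>\<^sub>0 'k)" where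
  "ae_mult x y = (\<Sum>m\<in>Poly_Mapping.keys x. \<Sum>n\<in>Poly_Mapping.keys y.
      Poly_Mapping.single (mono_mult m n) (Poly_Mapping.lookup x m * Poly_Mapping.lookup y n * mono_coeff m n))"

definition wt :: "nat \<Rightarrow> mono \<Rightarrow> nat" where
  "wt p m = (\<Sum>k\<in>Poly_Mapping.keys (fst m). Poly_Mapping.lookup (fst m) k * p ^ k) + (\<Sum>k\<in>snd m. p ^ k)"

text \<open>The monomial m taubar_2^eps has (A//E(2))_*-part m = (e, S - {2}).
F^j = span of monomials m taubar_2^eps with wt(m) \<ge> p j.\<close>
definition Filt :: "nat \<Rightarrow> nat \<Rightarrow> (mono \<Rightarrow>\<^sub>0 'k::field) set" where
  "Filt p j = {x \<in> AE1. \<forall>m\<in>Poly_Mapping.keys x. wt p (fst m, snd m - {2}) \<ge> p * j}"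

end

theory Submission
  imports Defs
begin

lemma zsum_sup:
  assumes "finite K" "Poly_Mapping.keys e \<subseteq> K"
  shows "(\<Sum>k\<in>Poly_Mapping.keys e. Poly_Mapping.lookup e k * p ^ k)
       = (\<Sum>k\<in>K. Poly_Mapping.lookup e k * (p::nat) ^ k)"
  using assms by (intro sum.mono_neutral_left) (auto simp: in_keys_iff)

lemma wt_mult:
  assumes "finite (snd m)" "finite (snd n)" "snd m \<inter> snd n = {}"
  shows "wt p (fst (mono_mult m n), snd (mono_mult m n) - {2})
       = wt p (fst m, snd m - {2}) + wt p (fst n, snd n - {2})"
proof -
  let ?K = "Poly_Mapping.keys (fst m) \<union> Poly_Mapping.keys (fst n)"
  have fK: "finite ?K" by simp
  have a: "(\<Sum>k\<in>Poly_Mapping.keys (fst m + fst n). Poly_Mapping.lookup (fst m + fst n) k * p ^ k)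
     = (\<Sum>k\<in>Poly_Mapping.keys (fst m). Poly_Mapping.lookup (fst m) k * p ^ k)
     + (\<Sum>k\<in>Poly_Mapping.keys (fst n). Poly_Mapping.lookup (fst n) k * p ^ k)"
    apply (subst zsum_sup[OF fK keys_add])
    apply (subst zsum_sup[OF fK, of "fst m"], simp)
    apply (subst zsum_sup[OF fK, of "fst n"], simp)
    by (simp add: lookup_add distrib_right sum.distrib)
  have b: "(\<Sum>k\<in>(snd m \<union> snd n) - {2}. p ^ k) = (\<Sum>k\<in>snd m - {2}. p ^ k) + (\<Sum>k\<in>snd n - {2}. p ^ k)"
  proof -
    have "(snd m \<union> snd n) - {2} = (snd m - {2}) \<union> (snd n - {2})" by auto
    thus ?thesis using assms by (simp add: sum.union_disjoint Int_Diff Diff_Int_distrib2 inf_commute) (subst sum.union_disjoint; auto)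
  qed
  show ?thesis unfolding wt_def mono_mult_def using a b by simp
qed

lemma keys_ae_mult:
  "Poly_Mapping.keys (ae_mult x y) \<subseteq> {mono_mult m n | m n. m \<in> Poly_Mapping.keys x \<and> n \<in> Poly_Mapping.keys y \<and> snd m \<inter> snd n = {}}"
proof -
  have "Poly_Mapping.keys (ae_mult x y) \<subseteq> (\<Union>m\<in>Poly_Mapping.keys x. Poly_Mapping.keys (\<Sum>n\<in>Poly_Mapping.keys y.
      Poly_Mapping.single (mono_mult m n) (Poly_Mapping.lookup x m * Poly_Mapping.lookup y n * mono_coeff m n)))"
    unfolding ae_mult_def by (rule keys_sum)
  also have "\<dots> \<subseteq> (\<Union>m\<in>Poly_Mapping.keys x. \<Union>n\<in>Poly_Mapping.keys y. Poly_Mapping.keys (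
      Poly_Mapping.single (mono_mult m n) (Poly_Mapping.lookup x m * Poly_Mapping.lookup y n * mono_coeff m n)))"
    by (intro UN_mono order_refl keys_sum)
  also have "\<dots> \<subseteq> {mono_mult m n | m n. m \<in> Poly_Mapping.keys x \<and> n \<in> Poly_Mapping.keys y \<and> snd m \<inter> snd n = {}}"
    by (auto simp: mono_coeff_def split: if_splits) blast
  finally show ?thesis .
qed

theorem mainTheorem15:
  fixes p :: nat and i j :: nat
    and x y :: "mono \<Rightarrow>\<^sub>0 'k::{field,finite}"
  assumes "prime p" and "odd p" and "card (UNIV :: 'k set) = p"
    and "x \<in> Filt p i" and "y \<in> Filt p j"
  shows "ae_mult x y \<in> Filt p (i + j)"
proof -
  have X: "\<And>m. m \<in> Poly_Mapping.keys x \<Longrightarrow> valid_mono m \<and> p * i \<le> wt p (fst m, snd m - {2})"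
    using assms(4) by (auto simp: Filt_def AE1_def)
  have Y: "\<And>m. m \<in> Poly_Mapping.keys y \<Longrightarrow> valid_mono m \<and> p * j \<le> wt p (fst m, snd m - {2})"
    using assms(5) by (auto simp: Filt_def AE1_def)
  have "valid_mono q \<and> p * (i + j) \<le> wt p (fst q, snd q - {2})" if q: "q \<in> Poly_Mapping.keys (ae_mult x y)" for q
  proof -
    obtain m n where mn: "q = mono_mult m n" "m \<in> Poly_Mapping.keys x" "n \<in> Poly_Mapping.keys y" "snd m \<inter> snd n = {}"
      using keys_ae_mult q by blast
    have vm: "valid_mono m" and wm: "p * i \<le> wt p (fst m, snd m - {2})" using X mn(2) by auto
    have vn: "valid_mono n" and wn: "p * j \<le> wt p (fst n, snd n - {2})" using Y mn(3) by auto
    have "valid_mono q" using vm vn keys_add[of "fst m" "fst n"] unfolding mn(1) valid_mono_def mono_mult_def by auto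
    moreover have "p * (i + j) \<le> wt p (fst q, snd q - {2})"
      unfolding mn(1) using wt_mult[of m n p] vm vn mn(4) wm wn by (simp add: valid_mono_def algebra_simps)
    ultimately show ?thesis by blast
  qed
  thus ?thesis by (auto simp: Filt_def AE1_def)
qed

end
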